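(* Consider MDVI$(\alpha,K,M)$ with any $\alpha\in[0,1)$ and positive integers $K,M$ on an MDP as in the context, and set $v_K := w_K - \alpha w_{K-1}$. Then, for every realization of the samples and every $k\in\{1,\dots,K\}$, $$v^{\pi'_{k-1}} + \sum_{j=0}^{k-1}\gamma^j\pi_{k-1}P_{k-1-j}^{k-2}\varepsilon_{k-j} - \gamma^kH\mathbf{1} \;\le\; v_k \;\le\; v^{\pi'_k} + \sum_{j=0}^{k-1}\gamma^j\pi_kP_{k-j}^{k-1}\varepsilon_{k-j} + \gamma^kH\mathbf{1}.$$
   Context: MDP: finite state set $\mathcal{X}$, finite action set $\mathcal{A}$, discount $\gamma\in[0,1)$, reward $r\in[-1,1]^{\mathcal{X}\times\mathcal{A}}$, transition kernel $P(y|x,a)$, $H=1/(1-\gamma)$. $P$ is the matrix with $(Pv)(x,a)=\sum_yP(y|x,a)v(y)$; a policy $\pi$ is the matrix with $(\pi q)(x)=\sum_a\pi(a|x)q(x,a)$; $P^\pi := P\pi$; $T^\pi q=r+\gamma P^\pi q$; $q^\pi$ its fixed point, $v^\pi=\pi q^\pi$. $\mathbf 1$ all-ones vector; inequalities componentwise. MDVI$(\alpha,K,M)$: $s_0 = 0$, $w_0=w_{-1}=0$; for $k=0,\dots,K-1$: $v_k = w_k-\alpha w_{k-1}$; for each $(x,a)$, independent samples $y_{k,m,x,a}\sim P(\cdot|x,a)$, $m\in[M]$; $q_{k+1}(x,a) = r(x,a)+\frac{\gamma}{M}\sum_m v_k(y_{k,m,x,a})$; $s_{k+1}=q_{k+1}+\alpha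 s_k$; $w_{k+1}(x)=\max_a s_{k+1}(x,a)$. $\pi_k$ ($k=0,\dots,K$) is a deterministic greedy policy w.r.t. $s_k$. Notation: $\widehat P_k v(x,a)=\frac1M\sum_mv(y_{k,m,x,a})$; $\varepsilon_k=\gamma\widehat P_{k-1}v_{k-1}-\gamma Pv_{k-1}$ for $k\in[K]$. For $i\ge j$, $P_j^i := P^{\pi_i}\cdots P^{\pi_j}$, and $P_j^i:=I$ if $i<j$. $\pi'_k$ is the non-stationary policy following $\pi_{k-t}$ at time step $t\le k$ and $\pi_0$ afterwards; its value is $v^{\pi'_k}=\pi_kT^{\pi_{k-1}}\cdots T^{\pi_1}q^{\pi_0}$ (so $v^{\pi'_0}=v^{\pi_0}$). *)

theory Defs
  imports Main "HOL-Analysis.Analysis"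
begin

text \<open>Transition kernel P x a y = P(y|x,a); reward r x a; discount gamma.\<close>

definition Ppi :: "('x::finite \<Rightarrow> 'a \<Rightarrow> 'x \<Rightarrow> real) \<Rightarrow> ('x \<Rightarrow> 'a) \<Rightarrow> ('x \<Rightarrow> 'a \<Rightarrow> real) \<Rightarrow> 'x \<Rightarrow> 'a \<Rightarrow> real" where
  "Ppi P p q = (\<lambda>x a. \<Sum>y\<in>UNIV. P x a y * q y (p y))"

definition Tpi :: "('x::finite \<Rightarrow> 'a \<Rightarrow> 'x \<Rightarrow> real) \<Rightarrow> ('x \<Rightarrow> 'a \<Rightarrow> real) \<Rightarrow> real \<Rightarrow> ('x \<Rightarrow> 'a) \<Rightarrow> ('x \<Rightarrow> 'a \<Rightarrow> real) \<Rightarrow> 'x \<Rightarrow> 'a \<Rightarrow> real" where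
  "Tpi P r \<gamma> p q = (\<lambda>x a. r x a + \<gamma> * Ppi P p q x a)"

text \<open>q^pol: the fixed point of T^pol (unique for gamma < 1).\<close>
definition qpi :: "('x::finite \<Rightarrow> 'a \<Rightarrow> 'x \<Rightarrow> real) \<Rightarrow> ('x \<Rightarrow> 'a \<Rightarrow> real) \<Rightarrow> real \<Rightarrow> ('x \<Rightarrow> 'a) \<Rightarrow> 'x \<Rightarrow> 'a \<Rightarrow> real" where
  "qpi P r \<gamma> p = (THE q. Tpi P r \<gamma> p q = q)"

text \<open>Qns k = T^{pi_(k-1)} ... T^{pi_1} q^{pi_0}  (for k = 0 and k = 1 this is q^{pi_0}).\<close>
fun Qns :: "('x::finite \<Rightarrow> 'a \<Rightarrow> 'x \<Rightarrow> real) \<Rightarrow> ('x \<Rightarrow> 'a \<Rightarrow> real) \<Rightarrow> real \<Rightarrow> (nat \<Rightarrow> 'x \<Rightarrow> 'a) \<Rightarrow> nat \<Rightarrow> 'x \<Rightarrow> 'a \<Rightarrow> real" where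
  "Qns P r \<gamma> pol 0 = qpi P r \<gamma> (pol 0)"
| "Qns P r \<gamma> pol (Suc 0) = qpi P r \<gamma> (pol 0)"
| "Qns P r \<gamma> pol (Suc (Suc k)) = Tpi P r \<gamma> (pol (Suc k)) (Qns P r \<gamma> pol (Suc k))"

text \<open>Value of the non-stationary policy pol'_k: v^{pol'_k} = pi_k T^{pi_(k-1)} ... T^{pi_1} q^{pi_0}.\<close>
definition vns :: "('x::finite \<Rightarrow> 'a \<Rightarrow> 'x \<Rightarrow> real) \<Rightarrow> ('x \<Rightarrow> 'a \<Rightarrow> real) \<Rightarrow> real \<Rightarrow> (nat \<Rightarrow> 'x \<Rightarrow> 'a) \<Rightarrow> nat \<Rightarrow> 'x \<Rightarrow> real" where
  "vns P r \<gamma> pol k = (\<lambda>x. Qns P r \<gamma> pol k x (pol k x))"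

fun Pseg :: "('x::finite \<Rightarrow> 'a \<Rightarrow> 'x \<Rightarrow> real) \<Rightarrow> (nat \<Rightarrow> 'x \<Rightarrow> 'a) \<Rightarrow> nat \<Rightarrow> nat \<Rightarrow> ('x \<Rightarrow> 'a \<Rightarrow> real) \<Rightarrow> 'x \<Rightarrow> 'a \<Rightarrow> real" where
  "Pseg P pol lo 0 q = q"
| "Pseg P pol lo (Suc n) q = Ppi P (pol (lo + n)) (Pseg P pol lo n q)"

text \<open>P_j^i = P^{pi_i} ... P^{pi_j} for i >= j, identity if i < j (integer indices, j >= 0).\<close>
definition Pji :: "('x::finite \<Rightarrow> 'a \<Rightarrow> 'x \<Rightarrow> real) \<Rightarrow> (nat \<Rightarrow> 'x \<Rightarrow> 'a) \<Rightarrow> int \<Rightarrow> int \<Rightarrow> ('x \<Rightarrow> 'a \<Rightarrow> real) \<Rightarrow> 'x \<Rightarrow> 'a \<Rightarrow> real" where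
  "Pji P pol j i q = Pseg P pol (nat j) (nat (i - j + 1)) q"

definition wmax :: "('x \<Rightarrow> 'a::finite \<Rightarrow> real) \<Rightarrow> 'x \<Rightarrow> real" where
  "wmax s x = Max (range (s x))"

text \<open>Samples: y k m x a = y_{k,m,x,a}, m ranging over {0..<M}.
  mdvi_s k = s_k; s_0 = 0; s_(k+1) = q_(k+1) + alpha s_k with
  q_(k+1)(x,a) = r(x,a) + gamma/M sum_m v_k(y_{k,m,x,a}), v_k = w_k - alpha w_(k-1), w_(-1) = 0.\<close>
fun mdvi_s :: "real \<Rightarrow> real \<Rightarrow> nat \<Rightarrow> ('x \<Rightarrow> 'a::finite \<Rightarrow> real) \<Rightarrow> (nat \<Rightarrow> nat \<Rightarrow> 'x \<Rightarrow> 'a \<Rightarrow> 'x) \<Rightarrow> nat \<Rightarrow> 'x \<Rightarrow> 'a \<Rightarrow> real" where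
  "mdvi_s \<gamma> \<alpha> M r y 0 = (\<lambda>x a. 0)"
| "mdvi_s \<gamma> \<alpha> M r y (Suc k) = (\<lambda>x a.
     r x a + \<gamma> / real M * (\<Sum>m<M.
        wmax (mdvi_s \<gamma> \<alpha> M r y k) (y k m x a)
        - \<alpha> * (if k = 0 then 0 else wmax (mdvi_s \<gamma> \<alpha> M r y (k - 1)) (y k m x a)))
     + \<alpha> * mdvi_s \<gamma> \<alpha> M r y k x a)"

definition mdvi_w :: "real \<Rightarrow> real \<Rightarrow> nat \<Rightarrow> ('x \<Rightarrow> 'a::finite \<Rightarrow> real) \<Rightarrow> (nat \<Rightarrow> nat \<Rightarrow> 'x \<Rightarrow> 'a \<Rightarrow> 'x) \<Rightarrow> nat \<Rightarrow> 'x \<Rightarrow> real" where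
  "mdvi_w \<gamma> \<alpha> M r y k = wmax (mdvi_s \<gamma> \<alpha> M r y k)"

definition mdvi_v :: "real \<Rightarrow> real \<Rightarrow> nat \<Rightarrow> ('x \<Rightarrow> 'a::finite \<Rightarrow> real) \<Rightarrow> (nat \<Rightarrow> nat \<Rightarrow> 'x \<Rightarrow> 'a \<Rightarrow> 'x) \<Rightarrow> nat \<Rightarrow> 'x \<Rightarrow> real" where
  "mdvi_v \<gamma> \<alpha> M r y k = (\<lambda>x. mdvi_w \<gamma> \<alpha> M r y k x
      - \<alpha> * (if k = 0 then 0 else mdvi_w \<gamma> \<alpha> M r y (k - 1) x))"

definition mdvi_eps :: "('x::finite \<Rightarrow> 'a \<Rightarrow> 'x \<Rightarrow> real) \<Rightarrow> real \<Rightarrow> real \<Rightarrow> nat \<Rightarrow> ('x \<Rightarrow> 'a::finite \<Rightarrow> real) \<Rightarrow> (nat \<Rightarrow> nat \<Rightarrow> 'x \<Rightarrow> 'a \<Rightarrow> 'x) \<Rightarrow> nat \<Rightarrow> 'x \<Rightarrow> 'a \<Rightarrow> real" where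
  "mdvi_eps P \<gamma> \<alpha> M r y k = (\<lambda>x a.
      \<gamma> * ((1 / real M) * (\<Sum>m<M. mdvi_v \<gamma> \<alpha> M r y (k - 1) (y (k - 1) m x a)))
    - \<gamma> * (\<Sum>z\<in>UNIV. P x a z * mdvi_v \<gamma> \<alpha> M r y (k - 1) z))"

end

theory Submission
  imports Defs
begin

locale mdvi_ctx =
  fixes P :: "'x::finite \<Rightarrow> 'a::finite \<Rightarrow> 'x \<Rightarrow> real"
    and r :: "'x \<Rightarrow> 'a \<Rightarrow> real"
    and \<gamma> \<alpha> :: real and K M :: nat
    and y :: "nat \<Rightarrow> nat \<Rightarrow> 'x \<Rightarrow> 'a \<Rightarrow> 'x"
    and pol :: "nat \<Rightarrow> 'x \<Rightarrow> 'a"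
  assumes gamma0: "0 \<le> \<gamma>" and gamma1: "\<gamma> < 1" and alpha0: "0 \<le> \<alpha>"
    and rew: "\<And>x a. \<bar>r x a\<bar> \<le> 1"
    and Pnn: "\<And>x a z. 0 \<le> P x a z"
    and Psum: "\<And>x a. (\<Sum>z\<in>UNIV. P x a z) = 1"
    and greedy: "\<And>k x. k \<le> K \<Longrightarrow> mdvi_s \<gamma> \<alpha> M r y k x (pol k x) = mdvi_w \<gamma> \<alpha> M r y k x"
begin

lemma Ppi_mono: "(\<And>x a. f x a \<le> g x a) \<Longrightarrow> Ppi P p f x a \<le> Ppi P p g x a"
  unfolding Ppi_def by (rule sum_mono) (simp add: mult_left_mono Pnn)

lemma Ppi_add: "Ppi P p (\<lambda>x a. f x a + g x a) x a = Ppi P p f x a + Ppi P p g x a"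
  by (simp add: Ppi_def sum.distrib algebra_simps)

lemma Ppi_const: "Ppi P p (\<lambda>x a. c) x a = c"
  by (simp add: Ppi_def sum_distrib_right[symmetric] Psum)

lemma Ppi_scale: "Ppi P p (\<lambda>x a. c * f x a) x a = c * Ppi P p f x a"
  by (simp add: Ppi_def sum_distrib_left mult_ac)

lemma Ppi_sum: "Ppi P p (\<lambda>x a. \<Sum>j\<in>A. f j x a) x a = (\<Sum>j\<in>A. Ppi P p (f j) x a)"
  by (simp add: Ppi_def sum_distrib_left sum.swap[of _ A])

lemma Ppi_diff: "Ppi P p (\<lambda>x a. f x a - g x a) x a = Ppi P p f x a - Ppi P p g x a"
  by (simp add: Ppi_def sum_subtractf algebra_simps)

lemma Ppi_abs: assumes "\<And>x a. \<bar>f x a\<bar> \<le> B" shows "\<bar>Ppi P p f x a\<bar> \<le> B"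
proof -
  have "Ppi P p f x a \<le> Ppi P p (\<lambda>x a. B) x a"
    by (rule Ppi_mono) (use assms abs_le_D1 in blast)
  moreover have "Ppi P p (\<lambda>x a. - B) x a \<le> Ppi P p f x a"
    by (rule Ppi_mono) (meson assms abs_le_D2 minus_le_iff)
  ultimately show ?thesis by (simp add: Ppi_const)
qed

lemma max_attained:
  fixes d :: "'x \<Rightarrow> 'a \<Rightarrow> real"
  shows "\<exists>x0 a0. \<forall>x a. \<bar>d x a\<bar> \<le> \<bar>d x0 a0\<bar>"
proof -
  define m where "m = Max (range (\<lambda>(x,a). \<bar>d x a\<bar>))"
  have "m \<in> range (\<lambda>(x,a). \<bar>d x a\<bar>)" unfolding m_def by (rule Max_in) auto
  then obtain x0 a0 where m: "m = \<bar>d x0 a0\<bar>" by auto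
  have "\<bar>d x a\<bar> \<le> m" for x a
    unfolding m_def by (rule Max_ge) (auto intro: image_eqI[where x="(x,a)"])
  with m show ?thesis by blast
qed

lemma fix_zero:
  assumes "\<And>x a. d x a = \<gamma> * Ppi P p d x a"
  shows "d x a = 0"
proof -
  obtain x0 a0 where m: "\<And>x a. \<bar>d x a\<bar> \<le> \<bar>d x0 a0\<bar>" using max_attained by blast
  have "\<bar>Ppi P p d x0 a0\<bar> \<le> \<bar>d x0 a0\<bar>" by (rule Ppi_abs) (rule m)
  hence "\<bar>d x0 a0\<bar> \<le> \<gamma> * \<bar>d x0 a0\<bar>"
    using assms[of x0 a0] gamma0 by (metis abs_mult abs_of_nonneg mult_left_mono)
  hence "(1 - \<gamma>) * \<bar>d x0 a0\<bar> \<le> 0" by (simp add: algebra_simps)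
  hence "\<bar>d x0 a0\<bar> \<le> 0" using gamma1 by (simp add: mult_le_0_iff)
  thus ?thesis using m[of x a] by simp
qed

lemma fix_bound:
  assumes "\<And>x a. q x a = r x a + \<gamma> * Ppi P p q x a"
  shows "\<bar>q x a\<bar> \<le> 1 / (1 - \<gamma>)"
proof -
  obtain x0 a0 where m: "\<And>x a. \<bar>q x a\<bar> \<le> \<bar>q x0 a0\<bar>" using max_attained by blast
  have "\<bar>Ppi P p q x0 a0\<bar> \<le> \<bar>q x0 a0\<bar>" by (rule Ppi_abs) (rule m)
  hence "\<bar>\<gamma> * Ppi P p q x0 a0\<bar> \<le> \<gamma> * \<bar>q x0 a0\<bar>"
    using gamma0 by (simp add: abs_mult mult_left_mono)
  hence "\<bar>q x0 a0\<bar> \<le> 1 + \<gamma> * \<bar>q x0 a0\<bar>"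
    using assms[of x0 a0] rew[of x0 a0] by linarith
  hence "\<bar>q x0 a0\<bar> * (1 - \<gamma>) \<le> 1" by (simp add: algebra_simps)
  hence "\<bar>q x0 a0\<bar> \<le> 1 / (1 - \<gamma>)" using gamma1 by (simp add: pos_le_divide_eq)
  thus ?thesis using m[of x a] by linarith
qed

lemma fix_exists: "\<exists>q. Tpi P r \<gamma> p q = q"
proof -
  define Lm :: "real^('x\<times>'a) \<Rightarrow> real^('x\<times>'a)" where
    "Lm v = (\<chi> i. v$i - \<gamma> * (\<Sum>z\<in>UNIV. P (fst i) (snd i) z * v$(z, p z)))" for v
  have lin: "linear Lm"
  proof (rule linearI)
    show "Lm (u + v) = Lm u + Lm v" for u v
      unfolding Lm_def vec_eq_iff by (simp add: sum.distrib distrib_left ring_distribs)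
    show "Lm (c *\<^sub>R v) = c *\<^sub>R Lm v" for c v
      unfolding Lm_def vec_eq_iff by (simp add: sum_distrib_left right_diff_distrib mult_ac)
  qed
  have inj: "inj Lm"
  proof (rule injI)
    fix u v assume eq: "Lm u = Lm v"
    define d where "d x a = u$(x,a) - v$(x,a)" for x a
    have "d x a = \<gamma> * Ppi P p d x a" for x a
    proof -
      have "Lm u $ (x,a) = Lm v $ (x,a)" using eq by simp
      hence e: "u$(x,a) - \<gamma> * (\<Sum>z\<in>UNIV. P x a z * u$(z, p z))
             = v$(x,a) - \<gamma> * (\<Sum>z\<in>UNIV. P x a z * v$(z, p z))"
        unfolding Lm_def by simp
      have "Ppi P p d x a = (\<Sum>z\<in>UNIV. P x a z * u$(z, p z)) - (\<Sum>z\<in>UNIV. P x a z * v$(z, p z))"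
        unfolding Ppi_def d_def by (simp add: sum_subtractf right_diff_distrib)
      hence "\<gamma> * Ppi P p d x a = \<gamma> * (\<Sum>z\<in>UNIV. P x a z * u$(z, p z)) - \<gamma> * (\<Sum>z\<in>UNIV. P x a z * v$(z, p z))"
        by (simp add: right_diff_distrib)
      thus ?thesis using e unfolding d_def by linarith
    qed
    hence "d x a = 0" for x a by (rule fix_zero)
    thus "u = v" unfolding d_def vec_eq_iff by auto
  qed
  have "surj Lm" using linear_injective_imp_surjective lin inj by blast
  then obtain v where v: "Lm v = (\<chi> i. r (fst i) (snd i))" by (metis surjD)
  define q where "q x a = v$(x,a)" for x a
  have "Tpi P r \<gamma> p q x a = q x a" for x a
  proof -
    have "Lm v $ (x,a) = r x a" using v by simp
    hence "v$(x,a) - \<gamma> * (\<Sum>z\<in>UNIV. P x a z * v$(z, p z)) = r x a"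
      unfolding Lm_def by simp
    thus ?thesis unfolding Tpi_def Ppi_def q_def by simp
  qed
  thus ?thesis by blast
qed

lemma qpi_fix: "Tpi P r \<gamma> p (qpi P r \<gamma> p) = qpi P r \<gamma> p"
proof -
  have "\<exists>!q. Tpi P r \<gamma> p q = q"
  proof -
    obtain q where q: "Tpi P r \<gamma> p q = q" using fix_exists by blast
    have "q' = q" if "Tpi P r \<gamma> p q' = q'" for q'
    proof -
      define d where "d x a = q' x a - q x a" for x a
      have "d x a = \<gamma> * Ppi P p d x a" for x a
      proof -
        have e1: "q' x a = r x a + \<gamma> * Ppi P p q' x a"
          using fun_cong[OF fun_cong[OF that, of x], of a] unfolding Tpi_def by simp
        have e2: "q x a = r x a + \<gamma> * Ppi P p q x a"
          using fun_cong[OF fun_cong[OF q, of x], of a] unfolding Tpi_def by simp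
        have "Ppi P p d x a = Ppi P p q' x a - Ppi P p q x a"
          unfolding d_def by (rule Ppi_diff)
        thus ?thesis using e1 e2 unfolding d_def by (simp add: right_diff_distrib)
      qed
      hence "d x a = 0" for x a by (rule fix_zero)
      thus ?thesis unfolding d_def by auto
    qed
    thus ?thesis using q by blast
  qed
  thus ?thesis unfolding qpi_def by (rule theI')
qed

lemma qpi_bound: "\<bar>qpi P r \<gamma> p x a - r x a\<bar> \<le> \<gamma> * (1 / (1 - \<gamma>))"
proof -
  let ?q = "qpi P r \<gamma> p"
  have fx: "?q x a = r x a + \<gamma> * Ppi P p ?q x a" for x a
    using fun_cong[OF fun_cong[OF qpi_fix[of p], of x], of a] unfolding Tpi_def by simp
  have "\<bar>?q x a\<bar> \<le> 1 / (1 - \<gamma>)" for x a by (rule fix_bound) (rule fx)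
  hence "\<bar>Ppi P p ?q x a\<bar> \<le> 1 / (1 - \<gamma>)" by (rule Ppi_abs)
  hence "\<gamma> * \<bar>Ppi P p ?q x a\<bar> \<le> \<gamma> * (1 / (1 - \<gamma>))"
    using gamma0 by (rule mult_left_mono)
  hence "\<bar>\<gamma> * Ppi P p ?q x a\<bar> \<le> \<gamma> * (1 / (1 - \<gamma>))"
    using gamma0 by (simp add: abs_mult)
  thus ?thesis using fx[of x a] by simp
qed

abbreviation "ss \<equiv> mdvi_s \<gamma> \<alpha> M r y"
abbreviation "ww \<equiv> mdvi_w \<gamma> \<alpha> M r y"
abbreviation "vv \<equiv> mdvi_v \<gamma> \<alpha> M r y"
abbreviation "ee \<equiv> mdvi_eps P \<gamma> \<alpha> M r y"

definition "qk k = (\<lambda>x a. ss k x a - \<alpha> * ss (k - 1) x a)"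
definition "Uk k = (\<lambda>x a. \<Sum>j<k. \<gamma> ^ j * Pseg P pol (k - j) j (ee (k - j)) x a)"
definition "Lk k = (\<lambda>x a. \<Sum>j<k. \<gamma> ^ j * Pseg P pol (k - 1 - j) j (ee (k - j)) x a)"

lemma v0: "vv 0 x = 0"
  unfolding mdvi_v_def mdvi_w_def wmax_def by simp

lemma s_Suc: "ss (Suc k) x a = r x a + \<gamma> * (\<Sum>z\<in>UNIV. P x a z * vv k z) + ee (Suc k) x a + \<alpha> * ss k x a"
  unfolding mdvi_eps_def mdvi_v_def mdvi_w_def by (simp cong: if_cong)

lemma q_Suc: "qk (Suc k) x a = r x a + \<gamma> * (\<Sum>z\<in>UNIV. P x a z * vv k z) + ee (Suc k) x a"
  using s_Suc[of k x a] by (simp add: qk_def)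

lemma s_le_w: "ss k x a \<le> ww k x"
  unfolding mdvi_w_def wmax_def by (rule Max_ge) auto

lemma v_upper: assumes "1 \<le> k" "k \<le> K" shows "vv k x \<le> qk k x (pol k x)"
proof -
  have "ss (k-1) x (pol k x) \<le> ww (k-1) x" by (rule s_le_w)
  hence "\<alpha> * ss (k-1) x (pol k x) \<le> \<alpha> * ww (k-1) x" by (rule mult_left_mono[OF _ alpha0])
  thus ?thesis using greedy[OF assms(2), of x] assms(1) by (simp add: mdvi_v_def qk_def)
qed

lemma v_lower: assumes "1 \<le> k" "k \<le> K" shows "qk k x (pol (k-1) x) \<le> vv k x"
proof -
  have "ss k x (pol (k-1) x) \<le> ww k x" by (rule s_le_w)
  moreover have "ss (k-1) x (pol (k-1) x) = ww (k-1) x" using greedy[of "k-1" x] assms(2) by simp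
  ultimately show ?thesis using assms(1) by (simp add: mdvi_v_def qk_def)
qed

lemma chain_up: assumes "1 \<le> k" "k \<le> K"
  shows "qk (Suc k) x a \<le> Tpi P r \<gamma> (pol k) (qk k) x a + ee (Suc k) x a"
proof -
  have "(\<Sum>z\<in>UNIV. P x a z * vv k z) \<le> (\<Sum>z\<in>UNIV. P x a z * qk k z (pol k z))"
    by (rule sum_mono) (rule mult_left_mono[OF v_upper[OF assms] Pnn])
  hence "\<gamma> * (\<Sum>z\<in>UNIV. P x a z * vv k z) \<le> \<gamma> * (\<Sum>z\<in>UNIV. P x a z * qk k z (pol k z))"
    by (rule mult_left_mono[OF _ gamma0])
  thus ?thesis by (simp add: q_Suc Tpi_def Ppi_def)
qed

lemma chain_lo: assumes "1 \<le> k" "k \<le> K"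
  shows "Tpi P r \<gamma> (pol (k-1)) (qk k) x a + ee (Suc k) x a \<le> qk (Suc k) x a"
proof -
  have "(\<Sum>z\<in>UNIV. P x a z * qk k z (pol (k-1) z)) \<le> (\<Sum>z\<in>UNIV. P x a z * vv k z)"
    by (rule sum_mono) (rule mult_left_mono[OF v_lower[OF assms] Pnn])
  hence "\<gamma> * (\<Sum>z\<in>UNIV. P x a z * qk k z (pol (k-1) z)) \<le> \<gamma> * (\<Sum>z\<in>UNIV. P x a z * vv k z)"
    by (rule mult_left_mono[OF _ gamma0])
  thus ?thesis by (simp add: q_Suc Tpi_def Ppi_def)
qed

lemma q1: "qk (Suc 0) x a = r x a + ee (Suc 0) x a"
  using q_Suc[of 0 x a] by (simp add: v0)

lemma Qns_Suc: "Qns P r \<gamma> pol (Suc k) = Tpi P r \<gamma> (pol k) (Qns P r \<gamma> pol k)"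
  by (cases k) (simp_all add: qpi_fix)

lemma U_Suc: "Uk (Suc k) x a = ee (Suc k) x a + \<gamma> * Ppi P (pol k) (Uk k) x a"
proof -
  have "Uk (Suc k) x a = ee (Suc k) x a + (\<Sum>j<k. \<gamma>^Suc j * Pseg P pol (k-j) (Suc j) (ee (k-j)) x a)"
    unfolding Uk_def by (subst sum.lessThan_Suc_shift) simp
  also have "(\<Sum>j<k. \<gamma>^Suc j * Pseg P pol (k-j) (Suc j) (ee (k-j)) x a)
      = (\<Sum>j<k. \<gamma> * (\<gamma>^j * Ppi P (pol k) (Pseg P pol (k-j) j (ee (k-j))) x a))"
    by (rule sum.cong) auto
  also have "\<dots> = \<gamma> * Ppi P (pol k) (Uk k) x a"
    unfolding Uk_def by (simp only: Ppi_sum Ppi_scale sum_distrib_left)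
  finally show ?thesis .
qed

lemma L_Suc: "Lk (Suc k) x a = ee (Suc k) x a + \<gamma> * Ppi P (pol (k-1)) (Lk k) x a"
proof -
  have "Lk (Suc k) x a = ee (Suc k) x a + (\<Sum>j<k. \<gamma>^Suc j * Pseg P pol (k - Suc j) (Suc j) (ee (k-j)) x a)"
    unfolding Lk_def by (subst sum.lessThan_Suc_shift) simp
  also have "(\<Sum>j<k. \<gamma>^Suc j * Pseg P pol (k - Suc j) (Suc j) (ee (k-j)) x a)
      = (\<Sum>j<k. \<gamma> * (\<gamma>^j * Ppi P (pol (k-1)) (Pseg P pol (k-1-j) j (ee (k-j))) x a))"
  proof (rule sum.cong)
    fix j assume "j \<in> {..<k}"
    hence e: "k - Suc j + j = k - 1" by auto
    have e2: "k - 1 - j = k - Suc j" by simp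
    show "\<gamma>^Suc j * Pseg P pol (k - Suc j) (Suc j) (ee (k-j)) x a
      = \<gamma> * (\<gamma>^j * Ppi P (pol (k-1)) (Pseg P pol (k-1-j) j (ee (k-j))) x a)"
      by (simp only: e e2 Pseg.simps power_Suc mult.assoc)
  qed simp
  also have "\<dots> = \<gamma> * Ppi P (pol (k-1)) (Lk k) x a"
    unfolding Lk_def by (simp only: Ppi_sum Ppi_scale sum_distrib_left)
  finally show ?thesis .
qed

lemma upper: "1 \<le> k \<Longrightarrow> k \<le> K \<Longrightarrow>
  qk k x a \<le> Qns P r \<gamma> pol k x a + Uk k x a + \<gamma>^k * (1 / (1 - \<gamma>))"
proof (induction k arbitrary: x a)
  case 0 thus ?case by simp
next
  case (Suc k)
  show ?case
  proof (cases "k = 0")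
    case True
    have "r x a \<le> qpi P r \<gamma> (pol 0) x a + \<gamma> * (1 / (1 - \<gamma>))"
      using qpi_bound[of "pol 0" x a] by linarith
    thus ?thesis using True by (simp add: q1 Uk_def)
  next
    case False
    hence k1: "1 \<le> k" and kK: "k \<le> K" using Suc.prems by auto
    let ?H = "\<gamma>^k * (1 / (1 - \<gamma>))"
    have IH: "\<And>x a. qk k x a \<le> Qns P r \<gamma> pol k x a + Uk k x a + ?H"
      using Suc.IH k1 kK by blast
    have A: "qk (Suc k) x a \<le> Tpi P r \<gamma> (pol k) (qk k) x a + ee (Suc k) x a"
      by (rule chain_up[OF k1 kK])
    have "Ppi P (pol k) (qk k) x a \<le> Ppi P (pol k) (\<lambda>x a. Qns P r \<gamma> pol k x a + Uk k x a + ?H) x a"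
      by (rule Ppi_mono) (rule IH)
    hence "\<gamma> * Ppi P (pol k) (qk k) x a \<le> \<gamma> * Ppi P (pol k) (\<lambda>x a. Qns P r \<gamma> pol k x a + Uk k x a + ?H) x a"
      by (rule mult_left_mono[OF _ gamma0])
    also have "Ppi P (pol k) (\<lambda>x a. Qns P r \<gamma> pol k x a + Uk k x a + ?H) x a
       = Ppi P (pol k) (Qns P r \<gamma> pol k) x a + Ppi P (pol k) (Uk k) x a + ?H"
      by (simp add: Ppi_add Ppi_const)
    finally have B: "\<gamma> * Ppi P (pol k) (qk k) x a \<le> \<gamma> * (Ppi P (pol k) (Qns P r \<gamma> pol k) x a + Ppi P (pol k) (Uk k) x a + ?H)" .
    have "Qns P r \<gamma> pol (Suc k) x a = r x a + \<gamma> * Ppi P (pol k) (Qns P r \<gamma> pol k) x a"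
      by (simp add: Qns_Suc Tpi_def)
    moreover have "\<gamma> * (Ppi P (pol k) (Qns P r \<gamma> pol k) x a + Ppi P (pol k) (Uk k) x a + ?H)
      = \<gamma> * Ppi P (pol k) (Qns P r \<gamma> pol k) x a + \<gamma> * Ppi P (pol k) (Uk k) x a + \<gamma>^Suc k * (1 / (1 - \<gamma>))"
      by (simp add: algebra_simps)
    moreover have "Tpi P r \<gamma> (pol k) (qk k) x a = r x a + \<gamma> * Ppi P (pol k) (qk k) x a"
      by (simp add: Tpi_def)
    ultimately show ?thesis using A B U_Suc[of k x a] by linarith
  qed
qed

lemma lower: "1 \<le> k \<Longrightarrow> k \<le> K \<Longrightarrow>
  Qns P r \<gamma> pol (k - 1) x a + Lk k x a - \<gamma>^k * (1 / (1 - \<gamma>)) \<le> qk k x a"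
proof (induction k arbitrary: x a)
  case 0 thus ?case by simp
next
  case (Suc k)
  show ?case
  proof (cases "k = 0")
    case True
    have "qpi P r \<gamma> (pol 0) x a - \<gamma> * (1 / (1 - \<gamma>)) \<le> r x a"
      using qpi_bound[of "pol 0" x a] by linarith
    thus ?thesis using True by (simp add: q1 Lk_def)
  next
    case False
    hence k1: "1 \<le> k" and kK: "k \<le> K" using Suc.prems by auto
    let ?H = "\<gamma>^k * (1 / (1 - \<gamma>))"
    have IH: "\<And>x a. Qns P r \<gamma> pol (k-1) x a + Lk k x a - ?H \<le> qk k x a"
      using Suc.IH k1 kK by blast
    have A: "Tpi P r \<gamma> (pol (k-1)) (qk k) x a + ee (Suc k) x a \<le> qk (Suc k) x a"
      by (rule chain_lo[OF k1 kK])
    have "Ppi P (pol (k-1)) (\<lambda>x a. Qns P r \<gamma> pol (k-1) x a + Lk k x a - ?H) x a \<le> Ppi P (pol (k-1)) (qk k) x a"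
      by (rule Ppi_mono) (rule IH)
    hence "\<gamma> * Ppi P (pol (k-1)) (\<lambda>x a. Qns P r \<gamma> pol (k-1) x a + Lk k x a - ?H) x a \<le> \<gamma> * Ppi P (pol (k-1)) (qk k) x a"
      by (rule mult_left_mono[OF _ gamma0])
    moreover have "Ppi P (pol (k-1)) (\<lambda>x a. Qns P r \<gamma> pol (k-1) x a + Lk k x a - ?H) x a
       = Ppi P (pol (k-1)) (Qns P r \<gamma> pol (k-1)) x a + Ppi P (pol (k-1)) (Lk k) x a - ?H"
      by (simp add: Ppi_add Ppi_diff Ppi_const)
    ultimately have B: "\<gamma> * (Ppi P (pol (k-1)) (Qns P r \<gamma> pol (k-1)) x a + Ppi P (pol (k-1)) (Lk k) x a - ?H) \<le> \<gamma> * Ppi P (pol (k-1)) (qk k) x a"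
      by simp
    have "Qns P r \<gamma> pol k x a = r x a + \<gamma> * Ppi P (pol (k-1)) (Qns P r \<gamma> pol (k-1)) x a"
      using Qns_Suc[of "k-1"] k1 by (simp add: Tpi_def)
    moreover have "\<gamma> * (Ppi P (pol (k-1)) (Qns P r \<gamma> pol (k-1)) x a + Ppi P (pol (k-1)) (Lk k) x a - ?H)
      = \<gamma> * Ppi P (pol (k-1)) (Qns P r \<gamma> pol (k-1)) x a + \<gamma> * Ppi P (pol (k-1)) (Lk k) x a - \<gamma>^Suc k * (1 / (1 - \<gamma>))"
      by (simp add: algebra_simps)
    moreover have "Tpi P r \<gamma> (pol (k-1)) (qk k) x a = r x a + \<gamma> * Ppi P (pol (k-1)) (qk k) x a"
      by (simp add: Tpi_def)
    moreover have "Suc k - 1 = k" by simp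
    ultimately show ?thesis using A B L_Suc[of k x a] by (simp only:)
  qed
qed

end

theorem lemma25:
  fixes P :: "'x::finite \<Rightarrow> 'a::finite \<Rightarrow> 'x \<Rightarrow> real"
    and r :: "'x \<Rightarrow> 'a \<Rightarrow> real"
    and \<gamma> \<alpha> :: real and K M :: nat
    and y :: "nat \<Rightarrow> nat \<Rightarrow> 'x \<Rightarrow> 'a \<Rightarrow> 'x"
    and pol :: "nat \<Rightarrow> 'x \<Rightarrow> 'a"
  assumes gamma: "0 \<le> \<gamma>" "\<gamma> < 1"
    and alpha: "0 \<le> \<alpha>" "\<alpha> < 1"
    and KM: "0 < K" "0 < M"
    and rew: "\<And>x a. \<bar>r x a\<bar> \<le> 1"
    and Pnn: "\<And>x a z. 0 \<le> P x a z"
    and Psum: "\<And>x a. (\<Sum>z\<in>UNIV. P x a z) = 1"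
    and samples: "\<And>k m x a. 0 < P x a (y k m x a)"
    and greedy: "\<And>k x. k \<le> K \<Longrightarrow> mdvi_s \<gamma> \<alpha> M r y k x (pol k x) = mdvi_w \<gamma> \<alpha> M r y k x"
    and k: "1 \<le> k" "k \<le> K"
  shows "\<forall>x.
      vns P r \<gamma> pol (k - 1) x
        + (\<Sum>j<k. \<gamma> ^ j * Pji P pol (int k - 1 - int j) (int k - 2)
                              (mdvi_eps P \<gamma> \<alpha> M r y (k - j)) x (pol (k - 1) x))
        - \<gamma> ^ k * (1 / (1 - \<gamma>))
      \<le> mdvi_v \<gamma> \<alpha> M r y k x
    \<and> mdvi_v \<gamma> \<alpha> M r y k x
      \<le> vns P r \<gamma> pol k x
        + (\<Sum>j<k. \<gamma> ^ j * Pji P pol (int k - int j) (int k - 1)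
                              (mdvi_eps P \<gamma> \<alpha> M r y (k - j)) x (pol k x))
        + \<gamma> ^ k * (1 / (1 - \<gamma>))"
proof
  fix x
  interpret C: mdvi_ctx P r \<gamma> \<alpha> K M y pol
    by (rule mdvi_ctx.intro[OF gamma(1) gamma(2) alpha(1) rew Pnn Psum greedy])
  have PU: "(\<Sum>j<k. \<gamma> ^ j * Pji P pol (int k - int j) (int k - 1)
                              (mdvi_eps P \<gamma> \<alpha> M r y (k - j)) x (pol k x)) = C.Uk k x (pol k x)"
    unfolding C.Uk_def
  proof (rule sum.cong)
    fix j assume "j \<in> {..<k}"
    hence "nat (int k - int j) = k - j" "nat (int k - 1 - (int k - int j) + 1) = j" by auto
    thus "\<gamma> ^ j * Pji P pol (int k - int j) (int k - 1) (mdvi_eps P \<gamma> \<alpha> M r y (k - j)) x (pol k x)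
       = \<gamma> ^ j * Pseg P pol (k - j) j (mdvi_eps P \<gamma> \<alpha> M r y (k - j)) x (pol k x)"
      unfolding Pji_def by simp
  qed simp
  have PL: "(\<Sum>j<k. \<gamma> ^ j * Pji P pol (int k - 1 - int j) (int k - 2)
                              (mdvi_eps P \<gamma> \<alpha> M r y (k - j)) x (pol (k - 1) x)) = C.Lk k x (pol (k-1) x)"
    unfolding C.Lk_def
  proof (rule sum.cong)
    fix j assume "j \<in> {..<k}"
    hence "nat (int k - 1 - int j) = k - 1 - j" "nat (int k - 2 - (int k - 1 - int j) + 1) = j" by auto
    thus "\<gamma> ^ j * Pji P pol (int k - 1 - int j) (int k - 2) (mdvi_eps P \<gamma> \<alpha> M r y (k - j)) x (pol (k-1) x)
       = \<gamma> ^ j * Pseg P pol (k - 1 - j) j (mdvi_eps P \<gamma> \<alpha> M r y (k - j)) x (pol (k-1) x)"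
      unfolding Pji_def by simp
  qed simp
  have "mdvi_v \<gamma> \<alpha> M r y k x \<le> C.qk k x (pol k x)" by (rule C.v_upper[OF k])
  also have "\<dots> \<le> Qns P r \<gamma> pol k x (pol k x) + C.Uk k x (pol k x) + \<gamma>^k * (1 / (1 - \<gamma>))"
    by (rule C.upper[OF k])
  finally have U: "mdvi_v \<gamma> \<alpha> M r y k x \<le> vns P r \<gamma> pol k x + C.Uk k x (pol k x) + \<gamma>^k * (1 / (1 - \<gamma>))"
    unfolding vns_def .
  have "Qns P r \<gamma> pol (k-1) x (pol (k-1) x) + C.Lk k x (pol (k-1) x) - \<gamma>^k * (1 / (1 - \<gamma>)) \<le> C.qk k x (pol (k-1) x)"
    by (rule C.lower[OF k])
  also have "\<dots> \<le> mdvi_v \<gamma> \<alpha> M r y k x" by (rule C.v_lower[OF k])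
  finally have L: "vns P r \<gamma> pol (k-1) x + C.Lk k x (pol (k-1) x) - \<gamma>^k * (1 / (1 - \<gamma>)) \<le> mdvi_v \<gamma> \<alpha> M r y k x"
    unfolding vns_def .
  show "vns P r \<gamma> pol (k - 1) x
        + (\<Sum>j<k. \<gamma> ^ j * Pji P pol (int k - 1 - int j) (int k - 2)
                              (mdvi_eps P \<gamma> \<alpha> M r y (k - j)) x (pol (k - 1) x))
        - \<gamma> ^ k * (1 / (1 - \<gamma>))
      \<le> mdvi_v \<gamma> \<alpha> M r y k x
    \<and> mdvi_v \<gamma> \<alpha> M r y k x
      \<le> vns P r \<gamma> pol k x
        + (\<Sum>j<k. \<gamma> ^ j * Pji P pol (int k - int j) (int k - 1)
                              (mdvi_eps P \<gamma> \<alpha> M r y (k - j)) x (pol k x))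
        + \<gamma> ^ k * (1 / (1 - \<gamma>))"
    unfolding PU PL using U L by (intro conjI) linarith+
qed

end
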